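(* Let $F\in\mathbb{C}[x]$ have degree $n\ge 2$ and roots $z_1,\ldots,z_n$ (with multiplicity), let $0\le k\le n$, $K\ge 1$, and let $c_1,c_2$ satisfy \[ c_2\cdot n\cdot \ln\!\Big(\frac{1+2K}{2K}\Big)\ge c_1\cdot n\ge\frac{\max(1,k)}{\ln(1+\frac{1}{8K})}. \] Let $\Delta=\Delta(m,r)$ be $(1,\,4c_2\max(1,k)n^3)$-isolating for the roots $z_1,\ldots,z_k$. Then $F^{(k)}(z)\ne0$ for all $z\in c_2n^2\cdot\Delta$, and \[ \sum_{i=k+1}^n\left|\frac{F^{(i)}(m)(c_1nr)^{i-k}k!}{F^{(k)}(m)\,i!}\right|<\frac{1}{2K}. \]
   Context: $\Delta(m,r)$ is the open disk with center $m$ and radius $r>0$; $\lambda\cdot\Delta(m,r):=\Delta(m,\lambda r)$. For $0<\rho_1\le1\le\rho_2$, a disk $\Delta$ is $(\rho_1,\rho_2)$-isolating for a set $S$ of roots (with multiplicity) if $\rho_1\cdot\Delta$ contains exactly the roots in $S$ and $\rho_2\cdot\Delta\setminus\rho_1\cdot\Delta$ contains no root of $F$. *)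

theory Defs
  imports "HOL-Analysis.Analysis" "HOL-Computational_Algebra.Polynomial" "HOL-Library.Multiset"
begin

text \<open>The open disk Delta(m,r) is ball m r; lambda * Delta(m,r) = ball m (lambda * r).\<close>

definition isolating :: "complex poly \<Rightarrow> real \<Rightarrow> real \<Rightarrow> complex \<Rightarrow> real \<Rightarrow> complex multiset \<Rightarrow> bool" where
  "isolating F \<rho>1 \<rho>2 m r S \<longleftrightarrow>
     0 < r \<and> 0 < \<rho>1 \<and> \<rho>1 \<le> 1 \<and> 1 \<le> \<rho>2 \<and>
     (\<forall>z. z \<in> ball m (\<rho>1 * r) \<longrightarrow> count S z = order z F) \<and>
     (\<forall>z. z \<notin> ball m (\<rho>1 * r) \<longrightarrow> count S z = 0) \<and>
     (\<forall>z. z \<in> ball m (\<rho>2 * r) - ball m (\<rho>1 * r) \<longrightarrow> poly F z \<noteq> 0)"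

end

theory Submission imports Defs
begin

definition pdom :: "complex poly \<Rightarrow> real poly \<Rightarrow> bool" where
  "pdom p P \<longleftrightarrow> (\<forall>i. cmod (coeff p i) \<le> coeff P i)"

lemma pdom_nonneg: "pdom p P \<Longrightarrow> coeff P i \<ge> 0"
  unfolding pdom_def using norm_ge_zero order_trans by blast

lemma pdom_mult:
  assumes "pdom p P" "pdom q Q" shows "pdom (p*q) (P*Q)"
  unfolding pdom_def
proof
  fix n
  have "cmod (coeff (p*q) n) = cmod (\<Sum>i\<le>n. coeff p i * coeff q (n-i))" by (simp add: coeff_mult)
  also have "\<dots> \<le> (\<Sum>i\<le>n. cmod (coeff p i * coeff q (n-i)))" by (rule norm_sum)
  also have "\<dots> \<le> (\<Sum>i\<le>n. coeff P i * coeff Q (n-i))"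
    apply (rule sum_mono)
    using assms unfolding pdom_def norm_mult
    by (meson mult_mono norm_ge_zero order_trans)
  also have "\<dots> = coeff (P*Q) n" by (simp add: coeff_mult)
  finally show "cmod (coeff (p*q) n) \<le> coeff (P*Q) n" .
qed

lemma pdom_one: "pdom 1 1"
  unfolding pdom_def by (simp add: coeff_1)

lemma pdom_prod:
  assumes "finite I" "\<And>i. i \<in> I \<Longrightarrow> pdom (f i) (g i)"
  shows "pdom (\<Prod>i\<in>I. f i) (\<Prod>i\<in>I. g i)"
  using assms by (induction I rule: finite_induct) (auto simp: pdom_one pdom_mult)

lemma pdom_lin: "cmod w \<le> a \<Longrightarrow> pdom [:-w,1:] [:a,1:]"
  unfolding pdom_def by (auto simp: coeff_pCons split: nat.splits)

lemma pdom_lin2: "cmod v \<le> b \<Longrightarrow> pdom [:1,-v:] [:1,b:]"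
  unfolding pdom_def by (auto simp: coeff_pCons split: nat.splits)


lemma coeff_lin_pow_le:
  assumes "b \<ge> 0" shows "coeff ([:1,b:]^l) t \<le> (real l * b)^t"
proof (cases "t \<le> l")
  case True
  have "coeff ([:1,b:]^l) t = real (l choose t) * b^t"
    using coeff_linear_poly_power[OF True, of 1 b] by simp
  also have "\<dots> \<le> real (l^t) * b^t"
    using binomial_le_pow[OF True] assms by (intro mult_right_mono) (auto simp del: of_nat_power)
  finally show ?thesis by (simp add: power_mult_distrib)
next
  case False
  have "degree ([:1,b:]^l) \<le> degree [:1,b:] * l" by (rule degree_power_le)
  also have "degree [:1,b:] * l \<le> l" by simp
  finally have "coeff ([:1,b:]^l) t = 0" using False by (intro coeff_eq_0) auto
  then show ?thesis using assms by simp
qed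

lemma sum_coeff_le_poly:
  fixes P :: "real poly"
  assumes "\<And>i. coeff P i \<ge> 0" "x \<ge> 0" "finite S"
  shows "(\<Sum>i\<in>S. coeff P i * x^i) \<le> poly P x"
proof -
  define N where "N = max (degree P) (if S = {} then 0 else Max S)"
  have SN: "S \<subseteq> {..N}" using assms(3) by (auto simp: N_def le_max_iff_disj)
  have "poly P x = (\<Sum>i\<le>degree P. coeff P i * x^i)" by (rule poly_altdef)
  also have "\<dots> = (\<Sum>i\<le>N. coeff P i * x^i)"
    by (rule sum.mono_neutral_left) (auto simp: N_def coeff_eq_0)
  finally have e: "poly P x = (\<Sum>i\<le>N. coeff P i * x^i)" .
  show ?thesis unfolding e
    by (rule sum_mono2) (use SN assms in auto)
qed


lemma core:
  fixes ws :: "nat \<Rightarrow> complex" and a b :: real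
  assumes fin: "finite I" "finite J" and cI: "card I = k" and cJ: "card J = l"
    and sm: "\<And>j. j\<in>I \<Longrightarrow> cmod (ws j) \<le> a" and bg: "\<And>j. j\<in>J \<Longrightarrow> cmod (ws j) \<ge> b"
    and b0: "b > 0" and a0: "a \<ge> 0"
  defines "A \<equiv> \<Prod>j\<in>I. [:-ws j,1:]" and "Q \<equiv> \<Prod>j\<in>J. [:1, -1/ws j:]"
  shows "cmod (coeff (A*Q) k - 1) \<le> (1 + a*l/b)^k - 1"
    and "\<rho> > 0 \<Longrightarrow> (\<Sum>i=k+1..N. cmod (coeff (A*Q) i) * \<rho>^(i-k)) \<le> (1+a/\<rho>)^k * ((1+\<rho>/b)^l - 1)"
proof -
  define Ad where "Ad = [:a,1:]^k"
  define Qd where "Qd = [:1,1/b:]^l"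
  have dA: "pdom A Ad"
  proof -
    have "pdom A (\<Prod>j\<in>I. [:a,1:])" unfolding A_def
      by (rule pdom_prod[OF fin(1)]) (auto intro: pdom_lin sm)
    then show ?thesis by (simp add: Ad_def cI)
  qed
  have dQ: "pdom Q Qd"
  proof -
    have "pdom Q (\<Prod>j\<in>J. [:1,1/b:])" unfolding Q_def
    proof (rule pdom_prod[OF fin(2)])
      fix j assume "j \<in> J"
      then have "cmod (ws j) \<ge> b" by (rule bg)
      then have "cmod (1 / ws j) \<le> 1 / b" using b0
        by (simp add: norm_divide frac_le)
      from pdom_lin2[OF this] show "pdom [:1, -1/ws j:] [:1, 1/b:]" by simp
    qed
    then show ?thesis by (simp add: Qd_def cJ)
  qed
  have degA: "degree A = k" unfolding A_def
    by (subst degree_prod_eq_sum_degree) (auto simp: cI)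
  have lcA: "lead_coeff A = 1" unfolding A_def by (simp add: lead_coeff_prod)
  have Ak: "coeff A k = 1" using degA lcA by simp
  have Agt: "coeff A i = 0" if "i > k" for i using degA that by (intro coeff_eq_0) auto
  have Q0: "coeff Q 0 = 1" unfolding poly_0_coeff_0[symmetric] Q_def poly_prod by simp
  have Qd0: "coeff Qd 0 = 1" unfolding poly_0_coeff_0[symmetric] Qd_def by simp
  have cAd: "coeff Ad s = real (k choose s) * a^(k-s)" if "s \<le> k" for s
    using coeff_linear_poly_power[OF that, of a 1] by (simp add: Ad_def)
  have cQd: "coeff Qd t \<le> (real l * (1/b))^t" for t
    unfolding Qd_def by (rule coeff_lin_pow_le) (use b0 in auto)
  show "cmod (coeff (A*Q) k - 1) \<le> (1 + a*l/b)^k - 1"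
  proof -
    have "coeff (A*Q) k = (\<Sum>s<Suc k. coeff A s * coeff Q (k-s))"
      by (simp add: coeff_mult lessThan_Suc_atMost)
    also have "\<dots> = (\<Sum>s<k. coeff A s * coeff Q (k-s)) + 1" by (simp add: Ak Q0)
    finally have "coeff (A*Q) k - 1 = (\<Sum>s<k. coeff A s * coeff Q (k-s))" by simp
    then have "cmod (coeff (A*Q) k - 1) \<le> (\<Sum>s<k. cmod (coeff A s * coeff Q (k-s)))"
      by (simp add: norm_sum)
    also have "\<dots> \<le> (\<Sum>s<k. coeff Ad s * coeff Qd (k-s))"
      apply (rule sum_mono)
      using dA dQ unfolding pdom_def norm_mult
      by (meson mult_mono norm_ge_zero order_trans)
    also have "\<dots> \<le> (\<Sum>s<k. real (k choose s) * a^(k-s) * (real l * (1/b))^(k-s))"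
      apply (rule sum_mono)
      subgoal for s
        using cAd[of s] cQd[of "k-s"] a0 by (auto intro!: mult_left_mono)
      done
    also have "\<dots> = (\<Sum>s<k. real (k choose s) * (a*l/b)^(k-s))"
      by (simp add: power_mult_distrib[symmetric] mult.assoc)
    also have "\<dots> = (1 + a*l/b)^k - 1"
    proof -
      have "(1 + a*l/b)^k = (\<Sum>s\<le>k. real (k choose s) * 1^s * (a*l/b)^(k-s))"
        by (rule binomial_ring)
      also have "\<dots> = (\<Sum>s<Suc k. real (k choose s) * (a*l/b)^(k-s))"
        by (simp add: lessThan_Suc_atMost)
      also have "\<dots> = (\<Sum>s<k. real (k choose s) * (a*l/b)^(k-s)) + 1" by simp
      finally show ?thesis by simp
    qed
    finally show ?thesis .
  qed
  assume rho: "\<rho> > 0"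
  have dQ1: "pdom (Q - 1) (Qd - 1)"
    using dQ Q0 Qd0 unfolding pdom_def by (auto simp: coeff_1)
  have dP: "pdom (A*(Q-1)) (Ad*(Qd-1))" by (rule pdom_mult[OF dA dQ1])
  have "(\<Sum>i=k+1..N. cmod (coeff (A*Q) i) * \<rho>^(i-k)) \<le>
        (\<Sum>i=k+1..N. coeff (Ad*(Qd-1)) i * \<rho>^i / \<rho>^k)"
  proof (rule sum_mono)
    fix i assume i: "i \<in> {k+1..N}"
    have "A*Q = A*(Q-1) + A" by (simp add: algebra_simps)
    then have "coeff (A*Q) i = coeff (A*(Q-1)) i" using Agt[of i] i by simp
    then have "cmod (coeff (A*Q) i) \<le> coeff (Ad*(Qd-1)) i" using dP unfolding pdom_def by simp
    moreover have "\<rho>^(i-k) = \<rho>^i / \<rho>^k" using i rho by (simp add: power_diff)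
    ultimately show "cmod (coeff (A*Q) i) * \<rho>^(i-k) \<le> coeff (Ad*(Qd-1)) i * \<rho>^i / \<rho>^k"
      using rho by (simp add: divide_right_mono mult_right_mono)
  qed
  also have "\<dots> = (\<Sum>i=k+1..N. coeff (Ad*(Qd-1)) i * \<rho>^i) / \<rho>^k"
    by (simp add: sum_divide_distrib)
  also have "\<dots> \<le> poly (Ad*(Qd-1)) \<rho> / \<rho>^k"
    by (rule divide_right_mono, rule sum_coeff_le_poly) (use rho pdom_nonneg[OF dP] in auto)
  also have "\<dots> = (a+\<rho>)^k / \<rho>^k * ((1+\<rho>/b)^l - 1)"
    using rho by (simp add: Ad_def Qd_def)
  also have "(a+\<rho>)^k / \<rho>^k = (1+a/\<rho>)^k"
  proof -
    have "(a+\<rho>)/\<rho> = 1+a/\<rho>" using rho by (simp add: field_simps)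
    then show ?thesis by (metis power_divide)
  qed
  finally show "(\<Sum>i=k+1..N. cmod (coeff (A*Q) i) * \<rho>^(i-k)) \<le> (1+a/\<rho>)^k * ((1+\<rho>/b)^l - 1)" .
qed


lemma shift_deriv:
  fixes F :: "complex poly"
  shows "poly ((pderiv ^^ i) F) c = fact i * coeff (pcompose F [:c,1:]) i"
proof -
  have e: "(pderiv ^^ i) (pcompose F [:c,1:]) = pcompose ((pderiv ^^ i) F) [:c,1:]"
    by (induction i) (simp_all add: pderiv_pcompose pderiv_pCons)
  have "poly ((pderiv ^^ i) F) c = coeff ((pderiv ^^ i) (pcompose F [:c,1:])) 0"
    unfolding e poly_0_coeff_0[symmetric] by (simp add: poly_pcompose)
  also have "\<dots> = fact i * coeff (pcompose F [:c,1:]) i"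
    by (simp add: coeff_higher_pderiv pochhammer_fact)
  finally show ?thesis .
qed

lemma factor_at:
  fixes F :: "complex poly" and zs :: "nat \<Rightarrow> complex"
  assumes roots: "F = smult (lead_coeff F) (\<Prod>i=1..n. [:- zs i, 1:])" and kn: "k \<le> n"
    and nz: "\<And>j. j\<in>{k+1..n} \<Longrightarrow> zs j \<noteq> c"
  shows "pcompose F [:c,1:] = smult (lead_coeff F * (\<Prod>j=k+1..n. -(zs j - c)))
           ((\<Prod>j=1..k. [:-(zs j - c),1:]) * (\<Prod>j=k+1..n. [:1, -1/(zs j - c):]))"
proof -
  have lin: "pcompose [:-z,1:] [:c,1:] = [:-(z-c),1:]" for z :: complex
    by (simp add: pcompose_pCons)
  have "pcompose F [:c,1:] = smult (lead_coeff F) (\<Prod>i=1..n. [:-(zs i - c),1:])"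
    by (subst roots) (simp add: pcompose_smult pcompose_prod lin)
  also have "(\<Prod>i=1..n. [:-(zs i - c),1:]) = (\<Prod>i=1..k. [:-(zs i - c),1:]) * (\<Prod>i=k+1..n. [:-(zs i - c),1:])"
  proof -
    have "{1..n} = {1..k} \<union> {k+1..n}" using kn by auto
    then show ?thesis by (simp add: prod.union_disjoint)
  qed
  also have "(\<Prod>i=k+1..n. [:-(zs i - c),1:]) = (\<Prod>i=k+1..n. smult (-(zs i - c)) [:1, -1/(zs i - c):])"
  proof (rule prod.cong)
    fix x assume "x \<in> {k+1..n}"
    then have "zs x - c \<noteq> 0" using nz by auto
    then show "[:-(zs x - c),1:] = smult (-(zs x - c)) [:1, -1/(zs x - c):]"
      by (simp add: field_simps)
  qed simp
  also have "\<dots> = smult (\<Prod>j=k+1..n. -(zs j - c)) (\<Prod>i=k+1..n. [:1, -1/(zs i - c):])"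
    by (rule prod_smult)
  finally show ?thesis by (simp add: mult.assoc)
qed


lemma count_S: fixes k :: nat shows "count (image_mset zs (mset_set {1..k})) z = card {i\<in>{1..k}. zs i = z}"
proof -
  have sm: "set_mset (mset_set {1..k}) = {1..k}" by simp
  have "count (image_mset zs (mset_set {1..k})) z = (\<Sum>y\<in>zs -` {z} \<inter> {1..k}. count (mset_set {1..k}) y)"
    unfolding count_image_mset sm ..
  also have "\<dots> = (\<Sum>y\<in>zs -` {z} \<inter> {1..k}. 1)"
    by (rule sum.cong) auto
  also have "\<dots> = card (zs -` {z} \<inter> {1..k})" by simp
  also have "zs -` {z} \<inter> {1..k} = {i\<in>{1..k}. zs i = z}" by auto
  finally show ?thesis .
qed

lemma order_ge_card:
  fixes F :: "complex poly" and zs :: "nat \<Rightarrow> complex"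
  assumes roots: "F = smult (lead_coeff F) (\<Prod>i=1..n. [:- zs i, 1:])" and F0: "F \<noteq> 0"
  shows "card {i\<in>{1..n}. zs i = z} \<le> order z F"
proof -
  let ?T = "{i\<in>{1..n}. zs i = z}"
  have "(\<Prod>i\<in>?T. [:- zs i, 1:]) = (\<Prod>i\<in>?T. [:- z, 1:])" by (rule prod.cong) auto
  also have "\<dots> = [:-z,1:]^card ?T" by simp
  finally have e: "(\<Prod>i\<in>?T. [:- zs i, 1:]) = [:-z,1:]^card ?T" .
  have "(\<Prod>i\<in>?T. [:- zs i, 1:]) dvd (\<Prod>i=1..n. [:- zs i, 1:])"
    by (rule prod_dvd_prod_subset) auto
  also have "(\<Prod>i=1..n. [:- zs i, 1:]) dvd F"
    using roots dvd_smult[of "\<Prod>i=1..n. [:- zs i, 1:]" "\<Prod>i=1..n. [:- zs i, 1:]" "lead_coeff F"] by simp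
  finally have "[:-z,1:]^card ?T dvd F" unfolding e .
  then show ?thesis using F0 order_divides by blast
qed

lemma root_loc:
  fixes F :: "complex poly" and zs :: "nat \<Rightarrow> complex"
  assumes roots: "F = smult (lead_coeff F) (\<Prod>i=1..n. [:- zs i, 1:])" and F0: "F \<noteq> 0"
    and kn: "k \<le> n" and R1: "R \<ge> 1"
    and iso: "isolating F 1 R m r (image_mset zs (mset_set {1..k}))"
  shows "\<And>j. j\<in>{1..k} \<Longrightarrow> cmod (zs j - m) < r"
    and "\<And>j. j\<in>{k+1..n} \<Longrightarrow> cmod (zs j - m) \<ge> R * r"
proof -
  let ?S = "image_mset zs (mset_set {1..k})"
  from iso have inb: "\<And>z. z \<in> ball m r \<Longrightarrow> count ?S z = order z F"
    and outb: "\<And>z. z \<notin> ball m r \<Longrightarrow> count ?S z = 0"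
    and ann: "\<And>z. z \<in> ball m (R*r) - ball m r \<Longrightarrow> poly F z \<noteq> 0"
    unfolding isolating_def by auto
  show "cmod (zs j - m) < r" if j: "j\<in>{1..k}" for j
  proof -
    have "count ?S (zs j) > 0" unfolding count_S using j
      by (auto simp: card_gt_0_iff)
    then have "zs j \<in> ball m r" using outb by (metis less_irrefl)
    then show ?thesis by (simp add: dist_norm norm_minus_commute)
  qed
  show "cmod (zs j - m) \<ge> R * r" if j: "j\<in>{k+1..n}" for j
  proof -
    let ?z = "zs j"
    have "poly F ?z = 0"
    proof -
      have "poly (\<Prod>i=1..n. [:- zs i, 1:]) ?z = 0" unfolding poly_prod
        using j by (intro prod_zero) auto
      then show ?thesis by (subst roots) simp
    qed
    have nb: "?z \<notin> ball m r"
    proof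
      assume "?z \<in> ball m r"
      then have "count ?S ?z = order ?z F" by (rule inb)
      moreover have "card {i\<in>{1..k}. zs i = ?z} < card {i\<in>{1..n}. zs i = ?z}"
      proof (rule psubset_card_mono)
        have "j \<in> {i\<in>{1..n}. zs i = ?z}" "j \<notin> {i\<in>{1..k}. zs i = ?z}" using j by auto
        moreover have "{i\<in>{1..k}. zs i = ?z} \<subseteq> {i\<in>{1..n}. zs i = ?z}" using kn by auto
        ultimately show "{i\<in>{1..k}. zs i = ?z} \<subset> {i\<in>{1..n}. zs i = ?z}" by blast
      qed simp
      ultimately show False using order_ge_card[OF roots F0, of ?z] count_S[of zs k ?z] by simp
    qed
    have "?z \<notin> ball m (R*r)" using ann nb \<open>poly F ?z = 0\<close> by blast
    then show ?thesis by (simp add: dist_norm norm_minus_commute)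
  qed
qed


lemma pow_exp: "0 \<le> (y::real) \<Longrightarrow> (1+y)^k \<le> exp (real k * y)"
proof -
  assume y: "0 \<le> y"
  have "(1+y)^k \<le> (exp y)^k" by (rule power_mono) (use y in \<open>auto simp: add.commute exp_ge_add_one_self\<close>)
  also have "\<dots> = exp (real k * y)" by (simp add: exp_of_nat_mult)
  finally show ?thesis .
qed

lemma exp_small: "0 \<le> (y::real) \<Longrightarrow> y \<le> 1/2 \<Longrightarrow> exp y \<le> 1 + 2*y"
  using exp_bound_lemma[of y] by simp

lemma pow_small:
  assumes "0 \<le> (y::real)" "real k * y \<le> 1/2"
  shows "(1+y)^k - 1 \<le> 2 * (real k * y)"
  using pow_exp[OF assms(1), of k] exp_small[of "real k * y"] assms by simp



lemma ge1_mult: "1 \<le> a \<Longrightarrow> 1 \<le> b \<Longrightarrow> 1 \<le> a*(b::real)"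
  using mult_mono[of 1 a 1 b] by simp

theorem lemmaA1:
  fixes F :: "complex poly" and n k :: nat and zs :: "nat \<Rightarrow> complex"
    and K c1 c2 r :: real and m :: complex
  assumes deg: "degree F = n" and n2: "n \<ge> 2"
    and roots: "F = smult (lead_coeff F) (\<Prod>i=1..n. [:- zs i, 1:])"
    and kn: "k \<le> n" and K1: "K \<ge> 1"
    and hc2: "c2 * real n * ln ((1 + 2 * K) / (2 * K)) \<ge> c1 * real n"
    and hc1: "c1 * real n \<ge> real (max 1 k) / ln (1 + 1 / (8 * K))"
    and iso: "isolating F 1 (4 * c2 * real (max 1 k) * real n ^ 3) m r
                (image_mset zs (mset_set {1..k}))"
  shows "(\<forall>z \<in> ball m (c2 * real n ^ 2 * r). poly ((pderiv ^^ k) F) z \<noteq> 0) \<and>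
         (\<Sum>i = k+1..n. cmod (poly ((pderiv ^^ i) F) m * complex_of_real ((c1 * real n * r) ^ (i - k)) * fact k
                              / (poly ((pderiv ^^ k) F) m * fact i))) < 1 / (2 * K)"
proof -
  define K' where "K' = real (max 1 k)"
  have K'1: "K' \<ge> 1" and kK: "real k \<le> K'" by (auto simp: K'_def)
  define L1 where "L1 = ln (1 + 1/(8*K))"
  define L2 where "L2 = ln ((1 + 2*K)/(2*K))"
  have L1p: "L1 > 0" using K1 by (auto simp: L1_def intro!: ln_gt_zero)
  have L1u: "L1 \<le> 1/(8*K)" using ln_add_one_self_le_self[of "1/(8*K)"] K1 by (simp add: L1_def)
  have L2eq: "(1+2*K)/(2*K) = 1 + 1/(2*K)" using K1 by (simp add: field_simps)
  have L2p: "L2 > 0" using K1 by (auto simp: L2_def L2eq intro!: ln_gt_zero)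
  have L2u: "L2 \<le> 1/(2*K)" using ln_add_one_self_le_self[of "1/(2*K)"] K1 by (simp add: L2_def L2eq)
  have nr: "real n \<ge> 2" using n2 by simp
  define X1 where "X1 = c1 * real n"
  define X2 where "X2 = c2 * real n"
  have h1: "K' \<le> X1 * L1" using hc1 L1p by (simp add: K'_def X1_def L1_def pos_divide_le_eq)
  have h2: "X1 \<le> X2 * L2" using hc2 by (simp add: X1_def X2_def L2_def)
  have X1p: "X1 > 0"
  proof (rule ccontr)
    assume "\<not> X1 > 0"
    then have "X1 * L1 \<le> 0" using L1p by (simp add: mult_nonpos_nonneg)
    then show False using h1 K'1 by linarith
  qed
  have X1b: "8*K*K' \<le> X1"
  proof -
    have "X1*L1 \<le> X1*(1/(8*K))" by (rule mult_left_mono[OF L1u]) (use X1p in simp)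
    then have "K' \<le> X1/(8*K)" using h1 by simp
    then show ?thesis using K1 by (simp add: field_simps)
  qed
  have X2p: "X2 > 0"
  proof (rule ccontr)
    assume "\<not> X2 > 0"
    then have "X2 * L2 \<le> 0" using L2p by (simp add: mult_nonpos_nonneg)
    then show False using h2 X1p by linarith
  qed
  have X2b: "16*K*K*K' \<le> X2"
  proof -
    have "X2*L2 \<le> X2*(1/(2*K))" by (rule mult_left_mono[OF L2u]) (use X2p in simp)
    then have "8*K*K' \<le> X2/(2*K)" using h2 X1b by simp
    then show ?thesis using K1 by (simp add: field_simps)
  qed
  have KK: "16 \<le> 16*K*K*K'"
  proof -
    have "1 \<le> K*K" using K1 by (rule ge1_mult[OF K1])
    then have "1 \<le> K*K*K'" using K'1 by (rule ge1_mult)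
    then show ?thesis by simp
  qed
  have X2_16: "X2 \<ge> 16" using X2b KK by linarith
  have c2p: "c2 > 0" using X2p nr by (simp add: X2_def zero_less_mult_iff)
  have F0: "F \<noteq> 0" using deg n2 by auto
  have lc0: "lead_coeff F \<noteq> 0" using F0 by simp
  define R where "R = 4 * c2 * K' * real n ^ 3"
  have RX: "R = 4 * X2 * K' * real n ^ 2" by (simp add: R_def X2_def power3_eq_cube power2_eq_square)
  have R1: "R \<ge> 1"
  proof -
    have "1 \<le> real n ^ 2" using nr by (simp add: one_le_power)
    moreover have "1 \<le> X2 * K'" using X2_16 K'1 by (intro ge1_mult) auto
    ultimately have "1 \<le> X2 * K' * real n ^ 2" by (rule ge1_mult[rotated])
    then show ?thesis unfolding RX by simp
  qed
  have iso': "isolating F 1 R m r (image_mset zs (mset_set {1..k}))" using iso by (simp add: R_def K'_def)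
  have r0: "r > 0" using iso unfolding isolating_def by simp
  note small = root_loc(1)[OF roots F0 kn R1 iso']
  note big = root_loc(2)[OF roots F0 kn R1 iso']
  have Rr: "R * r = 4 * X2 * K' * real n ^ 2 * r" by (simp add: RX)
  have part1: "poly ((pderiv ^^ k) F) z \<noteq> 0" if z: "z \<in> ball m (c2 * real n ^ 2 * r)" for z
  proof -
    define d where "d = cmod (z - m)"
    have dD: "d < X2 * real n * r" using z
      by (simp add: d_def dist_norm norm_minus_commute X2_def power2_eq_square mult_ac)
    have d0: "d \<ge> 0" by (simp add: d_def)
    have sm: "cmod (zs j - z) \<le> r + d" if "j \<in> {1..k}" for j
    proof -
      have "cmod (zs j - z) = cmod ((zs j - m) - (z - m))" by simp
      also have "\<dots> \<le> cmod (zs j - m) + cmod (z - m)" by (rule norm_triangle_ineq4)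
      finally show ?thesis using small[OF that] by (simp add: d_def)
    qed
    have bg: "cmod (zs j - z) \<ge> R*r - d" if "j \<in> {k+1..n}" for j
    proof -
      have "cmod (zs j - m) - cmod (z - m) \<le> cmod ((zs j - m) - (z - m))" by (rule norm_triangle_ineq2)
      then show ?thesis using big[OF that] by (simp add: d_def)
    qed
    have base: "3*K' + X2 \<le> X2*K'*real n"
    proof -
      have a1: "X2*K'*2 \<le> X2*K'*real n" by (rule mult_left_mono) (use nr X2p K'1 in auto)
      have a2: "X2*1 \<le> X2*K'" by (rule mult_left_mono) (use X2p K'1 in auto)
      have a3: "16*K' \<le> X2*K'" by (rule mult_right_mono) (use X2_16 K'1 in auto)
      show ?thesis using a1 a2 a3 K'1 by linarith
    qed
    have key: "3 * (K' * real n) * (r + d) + d \<le> R * r"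
    proof -
      have nr0: "real n * r > 0" using nr r0 by simp
      have f1: "(3*K' + X2) * (real n * r) \<le> (X2*K'*real n) * (real n * r)"
        by (rule mult_right_mono[OF base]) (use nr0 in simp)
      have f2: "(3*K'*real n + 1) * d \<le> (3*K'*real n + 1) * (X2 * real n * r)"
        by (rule mult_left_mono) (use dD K'1 nr in auto)
      have e1: "3 * (K' * real n) * (r + d) + d = 3*K'*real n*r + (3*K'*real n + 1) * d"
        by (simp add: algebra_simps)
      have e2: "(3*K'*real n + 1) * (X2 * real n * r) = 3*X2*K'*(real n*real n*r) + X2 * real n * r"
        by (simp add: algebra_simps)
      have e3: "(3*K' + X2) * (real n * r) = 3*K'*real n*r + X2*real n*r" by (simp add: algebra_simps)
      have e4: "(X2*K'*real n) * (real n * r) = X2*K'*(real n*real n*r)" by (simp add: algebra_simps)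
      have e5: "R * r = 4 * (X2*K'*(real n*real n*r))" by (simp add: Rr power2_eq_square algebra_simps)
      show ?thesis using f1 f2 e1 e2 e3 e4 e5 by linarith
    qed
    have bpos: "R*r - d > 0"
    proof -
      have "0 \<le> 3 * (K' * real n) * (r + d)" using K'1 nr r0 d0 by simp
      moreover have "0 < 3 * (K' * real n) * (r + d)" using K'1 nr r0 d0 by simp
      ultimately show ?thesis using key by linarith
    qed
    have nz: "zs j \<noteq> z" if "j \<in> {k+1..n}" for j using bg[OF that] bpos by auto
    define A where "A = (\<Prod>j=1..k. [:-(zs j - z),1:])"
    define Q where "Q = (\<Prod>j=k+1..n. [:1, -1/(zs j - z):])"
    define C where "C = lead_coeff F * (\<Prod>j=k+1..n. -(zs j - z))"
    have "\<forall>j\<in>{k+1..n}. zs j - z \<noteq> 0" using nz by auto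
    then have C0: "C \<noteq> 0" using lc0 unfolding C_def by (simp add: prod_zero_iff) (metis)
    have fac: "pcompose F [:z,1:] = smult C (A*Q)"
      unfolding A_def Q_def C_def by (rule factor_at[OF roots kn nz])
    have cor: "cmod (coeff (A*Q) k - 1) \<le> (1 + (r+d)*real (n-k)/(R*r-d))^k - 1"
      unfolding A_def Q_def
      using core(1)[of "{1..k}" "{k+1..n}" k "n-k" "\<lambda>j. zs j - z" "r+d" "R*r-d"] sm bg bpos r0 d0
      by simp
    define y where "y = (r+d)*real (n-k)/(R*r-d)"
    have y0: "y \<ge> 0" using r0 d0 bpos by (simp add: y_def)
    have ky: "real k * y \<le> 1/3"
    proof -
      have "real k * real (n-k) \<le> K' * real n" by (rule mult_mono) (use kK K'1 in auto)
      then have "real k * real (n-k) * (r+d) \<le> K' * real n * (r+d)"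
        by (rule mult_right_mono) (use r0 d0 in simp)
      also have "\<dots> \<le> (R*r - d)/3" using key by simp
      finally have "real k * real (n-k) * (r+d) \<le> (R*r - d)/3" .
      then show ?thesis using bpos by (simp add: y_def field_simps)
    qed
    have "(1+y)^k - 1 \<le> 2 * (real k * y)" by (rule pow_small) (use y0 ky in auto)
    then have "cmod (coeff (A*Q) k - 1) \<le> 2/3" using cor ky by (simp add: y_def)
    then have hk: "coeff (A*Q) k \<noteq> 0" by auto
    have "poly ((pderiv ^^ k) F) z = fact k * (C * coeff (A*Q) k)"
      by (simp add: shift_deriv fac)
    then show ?thesis using hk C0 by simp
  qed
  have part2: "(\<Sum>i = k+1..n. cmod (poly ((pderiv ^^ i) F) m * complex_of_real ((c1 * real n * r) ^ (i - k)) * fact k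
                              / (poly ((pderiv ^^ k) F) m * fact i))) < 1 / (2 * K)"
  proof -
    have Rrp: "R * r > 0" using R1 r0 by simp
    have nz: "zs j \<noteq> m" if "j \<in> {k+1..n}" for j using big[OF that] Rrp by auto
    define A where "A = (\<Prod>j=1..k. [:-(zs j - m),1:])"
    define Q where "Q = (\<Prod>j=k+1..n. [:1, -1/(zs j - m):])"
    define C where "C = lead_coeff F * (\<Prod>j=k+1..n. -(zs j - m))"
    have "\<forall>j\<in>{k+1..n}. zs j - m \<noteq> 0" using nz by auto
    then have C0: "C \<noteq> 0" using lc0 unfolding C_def by (simp add: prod_zero_iff) (metis)
    have fac: "pcompose F [:m,1:] = smult C (A*Q)"
      unfolding A_def Q_def C_def by (rule factor_at[OF roots kn nz])
    define h where "h i = coeff (A*Q) i" for i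
    have pd: "poly ((pderiv ^^ i) F) m = fact i * (C * h i)" for i
      by (simp add: shift_deriv fac h_def)
    have sm: "cmod (zs j - m) \<le> r" if "j \<in> {1..k}" for j using small[OF that] by simp
    have bg: "cmod (zs j - m) \<ge> R*r" if "j \<in> {k+1..n}" for j using big[OF that] by simp
    have cor1: "cmod (h k - 1) \<le> (1 + r*real (n-k)/(R*r))^k - 1"
      unfolding A_def Q_def h_def
      using core(1)[of "{1..k}" "{k+1..n}" k "n-k" "\<lambda>j. zs j - m" "r" "R*r"] sm bg Rrp r0
      by simp
    define \<rho> where "\<rho> = c1 * real n * r"
    have \<rho>X: "\<rho> = X1 * r" by (simp add: \<rho>_def X1_def)
    have \<rho>0: "\<rho> > 0" using X1p r0 by (simp add: \<rho>X)
    have cor2: "(\<Sum>i=k+1..n. cmod (h i) * \<rho>^(i-k)) \<le> (1+r/\<rho>)^k * ((1+\<rho>/(R*r))^(n-k) - 1)"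
      unfolding A_def Q_def h_def
      using core(2)[of "{1..k}" "{k+1..n}" k "n-k" "\<lambda>j. zs j - m" "r" "R*r" \<rho> n] sm bg Rrp r0 \<rho>0
      by simp
    define y where "y = r*real (n-k)/(R*r)"
    have y0: "y \<ge> 0" using r0 Rrp R1 by (simp add: y_def)
    have yR: "y = real (n-k) / R" using r0 by (simp add: y_def)
    have ky: "real k * y \<le> 1/128"
    proof -
      have "real k * real (n-k) \<le> K' * real n" by (rule mult_mono) (use kK K'1 in auto)
      also have "\<dots> \<le> R / 128"
      proof -
        have "K' * real n * 2 \<le> K' * real n * real n" by (rule mult_left_mono) (use nr K'1 in auto)
        moreover have "K' * real n * real n * 16 \<le> K' * real n * real n * X2"
          by (rule mult_left_mono) (use X2_16 K'1 nr in auto)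
        ultimately show ?thesis by (simp add: RX power2_eq_square algebra_simps)
      qed
      finally show ?thesis using R1 by (simp add: yR field_simps)
    qed
    have "(1+y)^k - 1 \<le> 2 * (real k * y)" by (rule pow_small) (use y0 ky in auto)
    then have "cmod (h k - 1) \<le> 1/64" using cor1 ky by (simp add: y_def)
    then have hk: "cmod (h k) \<ge> 63/64" using norm_triangle_ineq2[of 1 "h k"] by (simp add: norm_minus_commute)
    then have hk0: "h k \<noteq> 0" by auto
    have t1: "(1+r/\<rho>)^k \<le> 1 + 1/(8*K)"
    proof -
      have "(1+r/\<rho>)^k \<le> exp (real k * (r/\<rho>))" by (rule pow_exp) (use r0 \<rho>0 in simp)
      also have "real k * (r/\<rho>) \<le> L1"
      proof -
        have "real k * (r/\<rho>) = real k / X1" using r0 by (simp add: \<rho>X)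
        also have "\<dots> \<le> K' / X1" by (rule divide_right_mono) (use kK X1p in auto)
        also have "\<dots> \<le> L1" using h1 X1p by (simp add: pos_divide_le_eq mult.commute)
        finally show ?thesis .
      qed
      then have "exp (real k * (r/\<rho>)) \<le> exp L1" by simp
      also have "exp L1 = 1 + 1/(8*K)"
      proof -
        have "0 \<le> 1/(8*K)" using K1 by simp
        then have "0 < 1 + 1/(8*K)" by linarith
        then show ?thesis by (simp add: L1_def)
      qed
      finally show ?thesis by simp
    qed
    define u where "u = \<rho>/(R*r)"
    have u0: "u \<ge> 0" using \<rho>0 Rrp by (simp add: u_def less_imp_le)
    have lu: "real (n-k) * u \<le> 1/(16*K)"
    proof -
      have uR: "u = X1 / R" using r0 by (simp add: u_def \<rho>X)
      have "real (n-k) * X1 \<le> real n * (X2 * (1/(2*K)))"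
      proof (rule mult_mono)
        show "X1 \<le> X2 * (1/(2*K))" using h2 mult_left_mono[OF L2u, of X2] X2p by simp
      qed (use X1p in auto)
      also have "\<dots> \<le> R / (16 * K)"
      proof -
        have "real n * 2 \<le> real n * real n" by (rule mult_left_mono) (use nr in auto)
        then have "real n * X2 * 2 \<le> real n * real n * X2 * K'"
          using mult_mono[of "real n * 2" "real n * real n" X2 "X2*K'"] X2p K'1 nr
          by (simp add: algebra_simps mult_left_mono)
        then show ?thesis using K1 by (simp add: RX power2_eq_square field_simps)
      qed
      finally show ?thesis using R1 K1 by (simp add: uR field_simps)
    qed
    have t2: "(1+u)^(n-k) - 1 \<le> 1/(8*K)"
    proof -
      have "1/(16*K) \<le> 1/2" using K1 by (simp add: field_simps)
      then have "(1+u)^(n-k) - 1 \<le> 2 * (real (n-k) * u)" using lu u0 by (intro pow_small) auto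
      then show ?thesis using lu by simp
    qed
    have S: "(\<Sum>i=k+1..n. cmod (h i) * \<rho>^(i-k)) \<le> (1 + 1/(8*K)) * (1/(8*K))"
    proof -
      have "(1+r/\<rho>)^k * ((1+u)^(n-k) - 1) \<le> (1 + 1/(8*K)) * (1/(8*K))"
        by (rule mult_mono[OF t1 t2]) (use K1 u0 in \<open>auto simp: one_le_power\<close>)
      then show ?thesis using cor2 by (simp add: u_def)
    qed
    have trm: "cmod (poly ((pderiv ^^ i) F) m * complex_of_real (\<rho> ^ (i - k)) * fact k
                              / (poly ((pderiv ^^ k) F) m * fact i)) = cmod (h i) * \<rho>^(i-k) / cmod (h k)" for i
    proof -
      have "poly ((pderiv ^^ i) F) m * complex_of_real (\<rho> ^ (i - k)) * fact k
                              / (poly ((pderiv ^^ k) F) m * fact i) = h i * complex_of_real (\<rho> ^ (i - k)) / h k"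
        unfolding pd using C0 hk0 by (simp add: field_simps)
      then show ?thesis using \<rho>0 by (simp add: norm_divide norm_mult norm_power)
    qed
    have "(\<Sum>i = k+1..n. cmod (poly ((pderiv ^^ i) F) m * complex_of_real (\<rho> ^ (i - k)) * fact k
                              / (poly ((pderiv ^^ k) F) m * fact i)))
          = (\<Sum>i=k+1..n. cmod (h i) * \<rho>^(i-k)) / cmod (h k)"
      unfolding trm by (simp add: sum_divide_distrib)
    also have "\<dots> \<le> ((1 + 1/(8*K)) * (1/(8*K))) / (63/64)"
    proof (rule frac_le)
      have "0 \<le> 1/(8*K)" using K1 by simp
      then show "0 \<le> (1 + 1/(8*K)) * (1/(8*K))" by simp
    qed (use S hk in auto)
    also have "\<dots> < 1 / (2*K)" using K1 by (simp add: field_simps)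
    finally show ?thesis by (simp add: \<rho>_def)
  qed
  show ?thesis using part1 part2 by blast
qed

end
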